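(* Consider $n$ bosonic modes with drift matrix $A$ (satisfying $A+A^{\sf T}<0$) and diffusion matrix $D$ (with strictly positive eigenvalues), continuously monitored by a general-dyne measurement. Let $\sigma_c$ be a conditional steady-state covariance matrix obtainable in this setting, i.e. a real symmetric $2n\times 2n$ matrix with $\sigma_c+i\Omega\ge0$ and $A\sigma_c+\sigma_c A^{\sf T}+D\ge 0$. Let $\lambda^{\downarrow}_1\ge\lambda^{\downarrow}_2$ be the two largest eigenvalues of $\sigma_c$, let $\alpha^{\uparrow}_1\le\alpha^{\uparrow}_2\le\dots$ be the (strictly positive) eigenvalues of $-(A+A^{\sf T})$ in increasing order, and let $\delta^{\downarrow}_1\ge\delta^{\downarrow}_2\ge\dots$ be the eigenvalues of $D$ in decreasing order. Then $$\lambda^{\downarrow}_1\lambda^{\downarrow}_2\le\frac{(\delta^{\downarrow}_1+\delta^{\downarrow}_2)^2}{4\,\alpha^{\uparrow}_1\alpha^{\uparrow}_2}.$$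
   Context: Setting: $n$ bosonic modes with canonical operators $\hat{\mathbf R}=(\hat x_1,\hat p_1,\dots,\hat x_n,\hat p_n)^{\sf T}$, $[\hat R_j,\hat R_k]=i\Omega_{jk}$, $\Omega=\bigoplus_{j=1}^n\begin{pmatrix}0&1\\-1&0\end{pmatrix}$. The covariance matrix (CM) of a state $\varrho$ is $\sigma_{jk}=\mathrm{Tr}(\{\hat R_j,\hat R_k\}\varrho)-2\mathrm{Tr}(\hat R_j\varrho)\mathrm{Tr}(\hat R_k\varrho)$. The system evolves by the Lindblad master equation $\dot\varrho=-i[\hat H,\varrho]+\sum_{j=1}^L\mathcal D[\hat c_j]\varrho$, with $\hat H=\frac12\hat{\mathbf R}^{\sf T}H\hat{\mathbf R}$ ($H$ real symmetric), $\hat{\mathbf c}=\widetilde C\hat{\mathbf R}$ ($\widetilde C$ a complex $L\times 2n$ matrix), $\mathcal D[O]\varrho=O\varrho O^\dagger-\frac12(O^\dagger O\varrho+\varrho O^\dagger O)$. The drift matrix is $A=\Omega(H+\mathrm{Im}[\widetilde C^\dagger\widetilde C])$ and the diffusion matrix is $D=2\Omega\,\mathrm{Re}[\widetilde C^\dagger\widetilde C]\Omega^{\sf T}$, so that without monitoring $\dot\sigma=A\sigma+\sigma A^{\sf T}+D$. Under continuous general-dyne monitoring of the environment (any diffusive Gaussian unravelling), the conditional CM $\sigma_c$ evolves deterministically, and a CM $\sigma_c$ is obtainable as a stabilising steady-state conditional CM for some general-dyne unravelling if and only if $\sigma_c+i\Omega\ge0$ and $A\sigma_c+\sigma_cA^{\sf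 T}+D\ge0$. *)

theory Defs
  imports "Jordan_Normal_Form.Char_Poly"
begin

text \<open>Symplectic form on 2n modes, ordering (x_1,p_1,...,x_n,p_n), indices 0-based:
  Omega_{2i,2i+1} = 1, Omega_{2i+1,2i} = -1.\<close>
definition Omega :: "nat \<Rightarrow> real mat" where
  "Omega n = mat (2*n) (2*n) (\<lambda>(j,k).
     if even j \<and> k = j + 1 then 1 else if odd j \<and> j = k + 1 then -1 else 0)"

definition real_psd :: "real mat \<Rightarrow> bool" where
  "real_psd M \<longleftrightarrow> M \<in> carrier_mat (dim_row M) (dim_row M) \<and> M\<^sup>T = M \<and>
     (\<forall>v \<in> carrier_vec (dim_row M). v \<bullet> (M *\<^sub>v v) \<ge> 0)"

definition real_negdef :: "real mat \<Rightarrow> bool" where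
  "real_negdef M \<longleftrightarrow> M \<in> carrier_mat (dim_row M) (dim_row M) \<and> M\<^sup>T = M \<and>
     (\<forall>v \<in> carrier_vec (dim_row M). v \<noteq> 0\<^sub>v (dim_row M) \<longrightarrow> v \<bullet> (M *\<^sub>v v) < 0)"

definition complex_psd :: "complex mat \<Rightarrow> bool" where
  "complex_psd M \<longleftrightarrow> M \<in> carrier_mat (dim_row M) (dim_row M) \<and>
     (\<forall>v \<in> carrier_vec (dim_row M).
        Im (conjugate v \<bullet> (M *\<^sub>v v)) = 0 \<and> Re (conjugate v \<bullet> (M *\<^sub>v v)) \<ge> 0)"

definition eigenvalue_list :: "real mat \<Rightarrow> real list \<Rightarrow> bool" where
  "eigenvalue_list M es \<longleftrightarrow> length es = dim_row M \<and>
     char_poly M = (\<Prod>e\<leftarrow>es. [:- e, 1:])"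

end

theory Submission
  imports Defs
begin


lemma householder:
  fixes u :: "real vec"
  assumes u: "u \<in> carrier_vec n" and uu: "u \<bullet> u = 1" and n: "0 < n"
  shows "\<exists>H \<in> carrier_mat n n. transpose_mat H = H \<and> H * H = 1\<^sub>m n \<and> H *\<^sub>v unit_vec n 0 = u"
proof (cases "u = unit_vec n 0")
  case True
  then show ?thesis by (intro bexI[of _ "1\<^sub>m n"]) auto
next
  case False
  define w where "w = vec n (\<lambda>i. u$i - (if i = 0 then 1 else 0))"
  have w: "w \<in> carrier_vec n" by (simp add: w_def)
  have ww: "(\<Sum>i<n. (w$i)^2) = 2 - 2 * u$0"
  proof -
    have "(\<Sum>i<n. (w$i)^2) = (\<Sum>i<n. (u$i)^2 - 2 * (if i = 0 then u$i else 0) + (if i = 0 then 1 else 0))"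
      by (rule sum.cong) (auto simp: w_def power2_eq_square algebra_simps)
    also have "\<dots> = (\<Sum>i<n. (u$i)^2) - 2 * (\<Sum>i<n. (if i = 0 then u$i else 0)) + (\<Sum>i<n. (if i = 0 then 1 else 0))"
      by (simp add: sum_subtractf sum.distrib sum_distrib_left[symmetric])
    also have "(\<Sum>i<n. (u$i)^2) = 1" using uu u
      by (simp add: scalar_prod_def power2_eq_square atLeast0LessThan)
    finally show ?thesis using n by simp
  qed
  have wne: "(\<Sum>i<n. (w$i)^2) \<noteq> 0"
  proof
    assume "(\<Sum>i<n. (w$i)^2) = 0"
    then have "\<forall>i\<in>{..<n}. (w$i)^2 = 0" by (subst (asm) sum_nonneg_eq_0_iff) auto
    then have "u = unit_vec n 0" using u by (intro eq_vecI) (auto simp: w_def unit_vec_def)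
    with False show False by simp
  qed
  define s where "s = (\<Sum>i<n. (w$i)^2)"
  define c where "c = 2 / s"
  have cs: "c * s = 2" using wne by (simp add: c_def s_def)
  have w0: "w$0 = u$0 - 1" using n by (simp add: w_def)
  have cw0: "c * w$0 = -1" using ww wne unfolding c_def w0 s_def[symmetric] by (simp add: field_simps)
  define H where "H = mat n n (\<lambda>(i,j). (if i = j then 1 else 0) - c * w$i * w$j)"
  have H: "H \<in> carrier_mat n n" by (simp add: H_def)
  have "transpose_mat H = H" by (rule eq_matI) (auto simp: H_def)
  moreover have "H * H = 1\<^sub>m n"
  proof (rule eq_matI)
    fix i j assume i: "i < dim_row (1\<^sub>m n)" and j: "j < dim_col (1\<^sub>m n)"
    have "(H * H) $$ (i,j) = (\<Sum>k<n. ((if i = k then 1 else 0) - c * w$i * w$k) * ((if k = j then 1 else 0) - c * w$k * w$j))"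
      using i j by (simp add: H_def scalar_prod_def atLeast0LessThan)
    also have "\<dots> = (\<Sum>k<n. (if i = k then (if k = j then 1 else 0) else 0))
       - (\<Sum>k<n. (if i = k then c * w$k * w$j else 0)) - (\<Sum>k<n. (if k = j then c * w$i * w$k else 0))
       + c * c * w$i * w$j * (\<Sum>k<n. (w$k)^2)"
    proof -
      have "(\<Sum>k<n. ((if i = k then 1 else 0) - c * w$i * w$k) * ((if k = j then 1 else 0) - c * w$k * w$j))
        = (\<Sum>k<n. (if i = k then (if k = j then 1 else 0) else 0)
       - (if i = k then c * w$k * w$j else 0) - (if k = j then c * w$i * w$k else 0)
       + c * c * w$i * w$j * (w$k)^2)"
        by (rule sum.cong) (auto simp: algebra_simps power2_eq_square)
      then show ?thesis by (simp add: sum_subtractf sum.distrib sum_distrib_left)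
    qed
    also have "\<dots> = (if i = j then 1 else 0) - 2 * c * w$i * w$j + c * (c * s) * w$i * w$j"
      using i j by (simp add: s_def)
    also have "\<dots> = 1\<^sub>m n $$ (i,j)" using i j cs by simp
    finally show "(H * H) $$ (i,j) = 1\<^sub>m n $$ (i,j)" .
  qed (auto simp: H_def)
  moreover have "H *\<^sub>v unit_vec n 0 = u"
  proof (rule eq_vecI)
    fix i assume i: "i < dim_vec u"
    have "(H *\<^sub>v unit_vec n 0) $ i = H $$ (i, 0)"
      using i u n by (simp add: H_def scalar_prod_def unit_vec_def atLeast0LessThan if_distrib cong: if_cong)
    also have "\<dots> = (if i = 0 then 1 else 0) - (c * w$0) * w$i" using i u n by (simp add: H_def)
    also have "\<dots> = u $ i" using i u cw0 by (simp add: w_def)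
    finally show "(H *\<^sub>v unit_vec n 0) $ i = u $ i" .
  qed (use u H in auto)
  ultimately show ?thesis using H by blast
qed

lemma self_sprod_pos:
  fixes v :: "real vec"
  assumes v: "v \<in> carrier_vec n" and v0: "v \<noteq> 0\<^sub>v n"
  shows "v \<bullet> v > 0"
proof -
  have vv: "v \<bullet> v = (\<Sum>i<n. (v$i)^2)" using v
    by (simp add: scalar_prod_def power2_eq_square atLeast0LessThan)
  have "v \<bullet> v \<noteq> 0"
  proof
    assume "v \<bullet> v = 0"
    then have "\<forall>i\<in>{..<n}. (v$i)^2 = 0" unfolding vv by (subst (asm) sum_nonneg_eq_0_iff) auto
    then have "v = 0\<^sub>v n" using v by (intro eq_vecI) auto
    with v0 show False by simp
  qed
  moreover have "v \<bullet> v \<ge> 0" unfolding vv by (intro sum_nonneg) auto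
  ultimately show ?thesis by simp
qed

definition dmat :: "nat \<Rightarrow> real list \<Rightarrow> real mat" where
  "dmat n es = mat n n (\<lambda>(i,j). if i = j then es ! i else 0)"

lemma spectral:
  fixes M :: "real mat"
  assumes "M \<in> carrier_mat n n" "transpose_mat M = M" "char_poly M = (\<Prod>e\<leftarrow>es. [:-e,1:])"
  shows "\<exists>P \<in> carrier_mat n n. transpose_mat P * P = 1\<^sub>m n \<and> transpose_mat P * M * P = dmat n es"
  using assms
proof (induction es arbitrary: n M)
  case Nil
  have "n = 0" using degree_monic_char_poly[OF Nil(1)] Nil(3) by simp
  then show ?case using Nil(1) by (intro bexI[of _ "1\<^sub>m 0"]) (auto intro!: eq_matI simp: dmat_def)
next
  case (Cons e es n M)
  note M = Cons(2) and Msym = Cons(3)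
  have cp: "char_poly M = [:-e,1:] * (\<Prod>e\<leftarrow>es. [:-e,1:])" using Cons(4) by simp
  have "degree (char_poly M) = n" using degree_monic_char_poly[OF M] by simp
  then have n0: "n \<noteq> 0" unfolding cp by (subst (asm) degree_mult_eq) (auto simp: monic_prod_list)
  then obtain m where nm: "n = Suc m" by (cases n) auto
  have "eigenvalue M e" unfolding eigenvalue_root_char_poly[OF M] cp by simp
  then obtain v where ev: "eigenvector M v e" unfolding eigenvalue_def by auto
  then have v: "v \<in> carrier_vec n" and v0: "v \<noteq> 0\<^sub>v n" and Mv: "M *\<^sub>v v = e \<cdot>\<^sub>v v"
    using M unfolding eigenvector_def by auto
  have vvpos: "v \<bullet> v > 0" by (rule self_sprod_pos[OF v v0])
  define u where "u = (1 / sqrt (v \<bullet> v)) \<cdot>\<^sub>v v"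
  have u: "u \<in> carrier_vec n" using v by (simp add: u_def)
  have uu: "u \<bullet> u = 1" using v vvpos by (simp add: u_def real_sqrt_mult[symmetric])
  have Mu: "M *\<^sub>v u = e \<cdot>\<^sub>v u" unfolding u_def
    by (simp add: mult_mat_vec[OF M v] Mv smult_smult_assoc mult.commute)
  from householder[OF u uu] n0 obtain H where H: "H \<in> carrier_mat n n" and Hsym: "transpose_mat H = H"
    and HH: "H * H = 1\<^sub>m n" and He: "H *\<^sub>v unit_vec n 0 = u" by auto
  have Hu: "H *\<^sub>v u = unit_vec n 0"
    using He[symmetric] H HH by (simp flip: assoc_mult_mat_vec)
  define A' where "A' = H * M * H"
  have A': "A' \<in> carrier_mat n n" using H M by (simp add: A'_def)
  have A'sym: "transpose_mat A' = A'"
  proof -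
    have "transpose_mat A' = transpose_mat H * transpose_mat (H * M)"
      unfolding A'_def by (rule transpose_mult) (use H M in auto)
    also have "transpose_mat (H * M) = transpose_mat M * transpose_mat H"
      by (rule transpose_mult) (use H M in auto)
    finally show ?thesis using Hsym Msym H M by (simp add: A'_def)
  qed
  have A'e: "A' *\<^sub>v unit_vec n 0 = e \<cdot>\<^sub>v unit_vec n 0"
  proof -
    have "A' *\<^sub>v unit_vec n 0 = H *\<^sub>v (M *\<^sub>v (H *\<^sub>v unit_vec n 0))"
      unfolding A'_def using H M
      by (simp add: assoc_mult_mat_vec[of "H*M" n n H n] assoc_mult_mat_vec[of H n n M n] del: assoc_mult_mat)
    also have "\<dots> = e \<cdot>\<^sub>v unit_vec n 0" unfolding He Mu mult_mat_vec[OF H u] Hu ..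
    finally show ?thesis .
  qed
  have col0: "A' $$ (i,0) = (if i = 0 then e else 0)" if "i < n" for i
    using arg_cong[OF A'e, of "\<lambda>x. x $ i"] that n0 A' by simp
  have row0: "A' $$ (0,j) = (if j = 0 then e else 0)" if "j < n" for j
  proof -
    have "A' $$ (0,j) = transpose_mat A' $$ (j,0)" using that n0 A' by simp
    then show ?thesis using A'sym col0[OF that] by simp
  qed
  define A3 where "A3 = mat m m (\<lambda>(i,j). A' $$ (Suc i, Suc j))"
  have A3: "A3 \<in> carrier_mat m m" by (simp add: A3_def)
  define E where "E = mat 1 1 (\<lambda>_. e)"
  have E: "E \<in> carrier_mat 1 1" by (simp add: E_def)
  have A'block: "A' = four_block_mat E (0\<^sub>m 1 m) (0\<^sub>m m 1) A3"
    by (rule eq_matI) (use A' nm col0 row0 in \<open>auto simp: E_def A3_def\<close>)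
  have "similar_mat_wit A' M H H"
    by (rule similar_mat_witI[of _ _ n]) (use HH H M A' in \<open>auto simp: A'_def\<close>)
  then have "char_poly A' = char_poly M" by (intro char_poly_similar) (auto simp: similar_mat_def)
  also have "char_poly A' = char_poly E * char_poly A3"
    unfolding A'block by (rule char_poly_four_block_zeros_col[OF E _ A3]) auto
  also have "char_poly E = [:-e,1:]"
    by (simp add: E_def char_poly_defs det_def sign_def)
  finally have cp3: "char_poly A3 = (\<Prod>e\<leftarrow>es. [:-e,1:])" unfolding cp
    by (metis mult_cancel_left pCons_eq_0_iff zero_neq_one)
  have A3sym: "transpose_mat A3 = A3"
  proof (rule eq_matI)
    fix i j assume "i < dim_row A3" "j < dim_col A3"
    then show "transpose_mat A3 $$ (i,j) = A3 $$ (i,j)"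
      using arg_cong[OF A'sym, of "\<lambda>X. X $$ (Suc j, Suc i)"] A' nm by (simp add: A3_def)
  qed (auto simp: A3_def)
  from Cons(1)[OF A3 A3sym cp3] obtain P3 where P3: "P3 \<in> carrier_mat m m"
    and P3P3: "transpose_mat P3 * P3 = 1\<^sub>m m" and P3A3: "transpose_mat P3 * A3 * P3 = dmat m es" by auto
  define B where "B = four_block_mat (1\<^sub>m 1) (0\<^sub>m 1 m) (0\<^sub>m m 1) P3"
  have B: "B \<in> carrier_mat n n" using four_block_carrier_mat[OF one_carrier_mat[of 1] P3, where B="0\<^sub>m 1 m" and C="0\<^sub>m m 1"] nm
    by (simp add: B_def)
  have BT: "transpose_mat B = four_block_mat (1\<^sub>m 1) (0\<^sub>m 1 m) (0\<^sub>m m 1) (transpose_mat P3)"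
    unfolding B_def using P3 by (subst transpose_four_block_mat) auto
  have BT': "transpose_mat B \<in> carrier_mat n n" using B by simp
  define P where "P = H * B"
  have P: "P \<in> carrier_mat n n" using H B by (simp add: P_def)
  have PT: "transpose_mat P = transpose_mat B * H"
    unfolding P_def using H B Hsym by (simp add: transpose_mult[of _ n n])
  have "transpose_mat P * P = transpose_mat B * B"
  proof -
    have "transpose_mat P * P = transpose_mat B * (H * H) * B"
      unfolding PT unfolding P_def using H B BT' by (simp add: assoc_mult_mat[of _ n n _ n _ n])
    then show ?thesis using HH BT' by simp
  qed
  also have "\<dots> = 1\<^sub>m n"
    unfolding BT unfolding B_def using P3 P3P3 nm
    by (subst mult_four_block_mat[of _ 1 1 _ m _ m]) auto
  finally have PP: "transpose_mat P * P = 1\<^sub>m n" .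
  have "transpose_mat P * M * P = transpose_mat B * A' * B"
    unfolding PT unfolding P_def A'_def using H B BT' M
    by (simp add: assoc_mult_mat[of _ n n _ n _ n])
  also have "\<dots> = four_block_mat E (0\<^sub>m 1 m) (0\<^sub>m m 1) (transpose_mat P3 * A3 * P3)"
  proof -
    have "transpose_mat B * A' = four_block_mat E (0\<^sub>m 1 m) (0\<^sub>m m 1) (transpose_mat P3 * A3)"
      unfolding BT A'block by (subst mult_four_block_mat[of _ 1 1 _ m _ m]) (use P3 A3 E in auto)
    moreover have "four_block_mat E (0\<^sub>m 1 m) (0\<^sub>m m 1) (transpose_mat P3 * A3) * B
       = four_block_mat E (0\<^sub>m 1 m) (0\<^sub>m m 1) (transpose_mat P3 * A3 * P3)"
      unfolding B_def by (subst mult_four_block_mat[of _ 1 1 _ m _ m]) (use P3 A3 E in auto)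
    ultimately show ?thesis by simp
  qed
  also have "\<dots> = dmat n (e # es)"
    unfolding P3A3 by (rule eq_matI) (use nm in \<open>auto simp: E_def dmat_def\<close>)
  finally show ?case using P PP by blast
qed

lemma dmat_mult_vec: "y \<in> carrier_vec n \<Longrightarrow> dmat n es *\<^sub>v y = vec n (\<lambda>k. es ! k * y $ k)"
proof (rule eq_vecI)
  fix i assume "y \<in> carrier_vec n" "i < dim_vec (vec n (\<lambda>k. es ! k * y $ k))"
  then have i: "i < n" and y: "dim_vec y = n" by auto
  have "(dmat n es *\<^sub>v y) $ i = (\<Sum>k\<in>{0..<n}. (if i = k then es ! i else 0) * y $ k)"
    using i y by (simp add: dmat_def scalar_prod_def)
  also have "\<dots> = (\<Sum>k\<in>{0..<n}. (if k = i then es ! i * y $ i else 0))"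
    by (rule sum.cong) auto
  finally show "(dmat n es *\<^sub>v y) $ i = vec n (\<lambda>k. es ! k * y $ k) $ i" using i by simp
qed (auto simp: dmat_def)

lemma inner_transp:
  fixes P :: "real mat"
  assumes P: "P \<in> carrier_mat n n" and x: "x \<in> carrier_vec n" and z: "z \<in> carrier_vec n"
  shows "x \<bullet> (P *\<^sub>v z) = (transpose_mat P *\<^sub>v x) \<bullet> z"
  using transpose_vec_mult_scalar[OF P z x] by simp

lemma spec2:
  fixes M :: "real mat"
  assumes M: "M \<in> carrier_mat n n" and Msym: "transpose_mat M = M" and el: "eigenvalue_list M es"
  shows "\<exists>P \<in> carrier_mat n n. transpose_mat P * P = 1\<^sub>m n \<and> P * transpose_mat P = 1\<^sub>m n \<and>
     (\<forall>k<n. M *\<^sub>v (P *\<^sub>v unit_vec n k) = es!k \<cdot>\<^sub>v (P *\<^sub>v unit_vec n k)) \<and>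
     (\<forall>x\<in>carrier_vec n. x \<bullet> (M *\<^sub>v x) = (\<Sum>k<n. es!k * ((transpose_mat P *\<^sub>v x)$k)^2))"
proof -
  from el have cp: "char_poly M = (\<Prod>e\<leftarrow>es. [:-e,1:])" unfolding eigenvalue_list_def by auto
  from spectral[OF M Msym cp] obtain P where P: "P \<in> carrier_mat n n"
    and PP: "transpose_mat P * P = 1\<^sub>m n" and PMP: "transpose_mat P * M * P = dmat n es" by auto
  have PT: "transpose_mat P \<in> carrier_mat n n" using P by simp
  have PP': "P * transpose_mat P = 1\<^sub>m n" by (rule mat_mult_left_right_inverse[OF PT P PP])
  have Meq: "M = P * dmat n es * transpose_mat P"
  proof -
    have "P * dmat n es * transpose_mat P = (P * transpose_mat P) * M * (P * transpose_mat P)"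
      unfolding PMP[symmetric] using P PT M by (simp add: assoc_mult_mat[of _ n n _ n _ n])
    then show ?thesis using PP' M by simp
  qed
  have Dm: "dmat n es \<in> carrier_mat n n" by (simp add: dmat_def)
  have Mvec: "M *\<^sub>v x = P *\<^sub>v (dmat n es *\<^sub>v (transpose_mat P *\<^sub>v x))" if x: "x \<in> carrier_vec n" for x
    unfolding Meq using P PT Dm x
    by (simp add: assoc_mult_mat_vec[of "P * dmat n es" n n _ n] assoc_mult_mat_vec[of P n n _ n] del: assoc_mult_mat)
  have "M *\<^sub>v (P *\<^sub>v unit_vec n k) = es!k \<cdot>\<^sub>v (P *\<^sub>v unit_vec n k)" if k: "k < n" for k
  proof -
    have "transpose_mat P *\<^sub>v (P *\<^sub>v unit_vec n k) = unit_vec n k"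
      using P PT PP by (simp flip: assoc_mult_mat_vec[of _ n n _ n])
    moreover have "dmat n es *\<^sub>v unit_vec n k = es!k \<cdot>\<^sub>v unit_vec n k"
      by (rule eq_vecI) (use k in \<open>auto simp: dmat_mult_vec\<close>)
    ultimately show ?thesis using Mvec[of "P *\<^sub>v unit_vec n k"] P k
      by (simp add: mult_mat_vec[OF P])
  qed
  moreover have "x \<bullet> (M *\<^sub>v x) = (\<Sum>k<n. es!k * ((transpose_mat P *\<^sub>v x)$k)^2)" if x: "x \<in> carrier_vec n" for x
  proof -
    define y where "y = transpose_mat P *\<^sub>v x"
    have y: "y \<in> carrier_vec n" using PT x by (simp add: y_def)
    have "x \<bullet> (M *\<^sub>v x) = y \<bullet> (dmat n es *\<^sub>v y)"
      unfolding Mvec[OF x] y_def[symmetric] using inner_transp[OF P x, of "dmat n es *\<^sub>v y"] Dm y by (simp add: y_def)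
    also have "\<dots> = (\<Sum>k<n. es!k * (y$k)^2)"
      using y by (simp add: dmat_mult_vec scalar_prod_def atLeast0LessThan power2_eq_square ac_simps)
    finally show ?thesis unfolding y_def .
  qed
  ultimately show ?thesis using P PP PP' by blast
qed


lemma bessel2:
  fixes y1 y2 :: "real vec"
  assumes y1: "y1 \<in> carrier_vec n" and y2: "y2 \<in> carrier_vec n"
    and n1: "y1 \<bullet> y1 = 1" and n2: "y2 \<bullet> y2 = 1" and o: "y1 \<bullet> y2 = 0" and k: "k < n"
  shows "(y1$k)^2 + (y2$k)^2 \<le> 1"
proof -
  define a where "a = y1$k"
  define b where "b = y2$k"
  have s1: "(\<Sum>i<n. (y1$i)^2) = 1" using n1 y1 by (simp add: scalar_prod_def power2_eq_square atLeast0LessThan)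
  have s2: "(\<Sum>i<n. (y2$i)^2) = 1" using n2 y2 by (simp add: scalar_prod_def power2_eq_square atLeast0LessThan)
  have s12: "(\<Sum>i<n. y1$i * y2$i) = 0" using o y2 by (simp add: scalar_prod_def atLeast0LessThan)
  have "0 \<le> (\<Sum>i<n. ((if i = k then 1 else 0) - a * y1$i - b * y2$i)^2)" by (intro sum_nonneg) auto
  also have "\<dots> = (\<Sum>i<n. (if i = k then 1 - 2 * a * y1$i - 2 * b * y2$i else 0) + a^2 * (y1$i)^2 + b^2 * (y2$i)^2 + 2*a*b*(y1$i * y2$i))"
    by (rule sum.cong) (auto simp: power2_eq_square algebra_simps)
  also have "\<dots> = (1 - 2*a*a - 2*b*b) + a^2 * (\<Sum>i<n. (y1$i)^2) + b^2 * (\<Sum>i<n. (y2$i)^2) + 2*a*b*(\<Sum>i<n. y1$i * y2$i)"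
    using k by (simp add: sum.distrib sum_distrib_left a_def b_def)
  also have "\<dots> = 1 - a^2 - b^2" unfolding s1 s2 s12 by (simp add: power2_eq_square)
  finally show ?thesis unfolding a_def b_def by simp
qed

lemma kyfan1:
  fixes d w :: "nat \<Rightarrow> real"
  assumes "\<forall>k<n. d k \<le> d 0" "\<forall>k<n. 0 \<le> w k" "(\<Sum>k<n. w k) = 1"
  shows "(\<Sum>k<n. d k * w k) \<le> d 0"
proof -
  have "(\<Sum>k<n. d k * w k) \<le> (\<Sum>k<n. d 0 * w k)"
    by (rule sum_mono) (use assms in \<open>auto intro: mult_right_mono\<close>)
  also have "\<dots> = d 0" using assms(3) by (simp add: sum_distrib_left[symmetric])
  finally show ?thesis .
qed

lemma kyfan2:
  fixes d w :: "nat \<Rightarrow> real"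
  assumes n: "2 \<le> n" and d: "\<forall>k<n. 1 \<le> k \<longrightarrow> d k \<le> d 1" "d 1 \<le> d 0"
    and w: "\<forall>k<n. 0 \<le> w k \<and> w k \<le> 1" and sw: "(\<Sum>k<n. w k) = 2"
  shows "(\<Sum>k<n. d k * w k) \<le> d 0 + d 1"
proof -
  have "(\<Sum>k<n. d k * w k) \<le> (\<Sum>k<n. d 1 * w k + (if k = 0 then (d 0 - d 1) * w 0 else 0))"
  proof (rule sum_mono)
    fix k assume "k \<in> {..<n}"
    then have k: "k < n" by simp
    show "d k * w k \<le> d 1 * w k + (if k = 0 then (d 0 - d 1) * w 0 else 0)"
    proof (cases "k = 0")
      case True then show ?thesis by (simp add: algebra_simps)
    next
      case False
      then have "d k \<le> d 1" using d k by auto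
      then show ?thesis using False w k by (simp add: mult_right_mono)
    qed
  qed
  also have "\<dots> = d 1 * 2 + (d 0 - d 1) * w 0"
    using n sw by (simp add: sum.distrib sum_distrib_left[symmetric])
  also have "\<dots> \<le> d 0 + d 1"
  proof -
    have "(d 0 - d 1) * w 0 \<le> (d 0 - d 1) * 1" using d w n by (intro mult_left_mono) auto
    then show ?thesis by simp
  qed
  finally show ?thesis .
qed

lemma final_ineq:
  fixes l1 l2 a1 a2 b1 b2 S :: real
  assumes "0 \<le> l1" "0 \<le> l2" "b1 \<le> a1" "b1 \<le> a2" "0 < b1" "b1 \<le> b2" "b1 + b2 \<le> a1 + a2"
    "l1 * a1 + l2 * a2 \<le> S"
  shows "l1 * l2 \<le> S^2 / (4 * b1 * b2)"
proof -
  have ab: "b1 * b2 \<le> a1 * a2"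
  proof -
    have "a1 * a2 - b1 * b2 = b1 * ((a1 - b1) + (a2 - b1) - (b2 - b1)) + (a1 - b1) * (a2 - b1)"
      by (simp add: algebra_simps)
    moreover have "0 \<le> b1 * ((a1 - b1) + (a2 - b1) - (b2 - b1))" using assms by (intro mult_nonneg_nonneg) auto
    moreover have "0 \<le> (a1 - b1) * (a2 - b1)" using assms by (intro mult_nonneg_nonneg) auto
    ultimately show ?thesis by linarith
  qed
  have pb: "0 < b1 * b2" using assms by simp
  have T0: "0 \<le> l1 * a1 + l2 * a2" using assms by (intro add_nonneg_nonneg mult_nonneg_nonneg) auto
  have "4 * (l1 * a1) * (l2 * a2) \<le> (l1 * a1 + l2 * a2)^2"
    using sum_squares_ge_zero[of "l1*a1 - l2*a2" 0] by (simp add: power2_eq_square algebra_simps)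
  also have "\<dots> \<le> S^2" using T0 assms(8) by (intro power_mono) auto
  finally have 1: "4 * (l1 * l2) * (a1 * a2) \<le> S^2" by (simp add: algebra_simps)
  have "4 * (l1 * l2) * (b1 * b2) \<le> 4 * (l1 * l2) * (a1 * a2)"
    using ab assms by (intro mult_left_mono) auto
  with 1 have "4 * (l1 * l2) * (b1 * b2) \<le> S^2" by linarith
  then show ?thesis using pb by (simp add: field_simps)
qed


lemma orthvec:
  fixes P :: "real mat"
  assumes P: "P \<in> carrier_mat N N" and PP: "transpose_mat P * P = 1\<^sub>m N" and i: "i < N" and j: "j < N"
  shows "(P *\<^sub>v unit_vec N i) \<bullet> (P *\<^sub>v unit_vec N j) = (if i = j then 1 else 0)"
proof -
  have "transpose_mat P *\<^sub>v (P *\<^sub>v unit_vec N i) = unit_vec N i"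
    using P PP by (simp flip: assoc_mult_mat_vec[of _ N N _ N])
  then have "(P *\<^sub>v unit_vec N i) \<bullet> (P *\<^sub>v unit_vec N j) = unit_vec N i \<bullet> unit_vec N j"
    using inner_transp[OF P _ unit_vec_carrier, of "P *\<^sub>v unit_vec N i" j] P by simp
  then show ?thesis using i j by simp
qed

lemma inner_pres:
  fixes P :: "real mat"
  assumes P: "P \<in> carrier_mat N N" and PP: "P * transpose_mat P = 1\<^sub>m N"
    and x: "x \<in> carrier_vec N" and z: "z \<in> carrier_vec N"
  shows "(transpose_mat P *\<^sub>v x) \<bullet> (transpose_mat P *\<^sub>v z) = x \<bullet> z"
proof -
  have "(transpose_mat P *\<^sub>v x) \<bullet> (transpose_mat P *\<^sub>v z) = x \<bullet> (P *\<^sub>v (transpose_mat P *\<^sub>v z))"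
    using inner_transp[OF P x, of "transpose_mat P *\<^sub>v z"] P z by simp
  also have "P *\<^sub>v (transpose_mat P *\<^sub>v z) = z"
    using P PP z by (simp flip: assoc_mult_mat_vec[of _ N N _ N])
  finally show ?thesis .
qed

lemma qS:
  fixes A \<sigma> D :: "real mat"
  assumes A: "A \<in> carrier_mat N N" and s: "\<sigma> \<in> carrier_mat N N" and D: "D \<in> carrier_mat N N"
    and ssym: "transpose_mat \<sigma> = \<sigma>" and v: "v \<in> carrier_vec N" and ev: "\<sigma> *\<^sub>v v = l \<cdot>\<^sub>v v"
  shows "v \<bullet> ((A * \<sigma> + \<sigma> * transpose_mat A + D) *\<^sub>v v) = l * (v \<bullet> ((A + transpose_mat A) *\<^sub>v v)) + v \<bullet> (D *\<^sub>v v)"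
proof -
  have AT: "transpose_mat A \<in> carrier_mat N N" using A by simp
  have "(A * \<sigma> + \<sigma> * transpose_mat A + D) *\<^sub>v v = (A * \<sigma>) *\<^sub>v v + (\<sigma> * transpose_mat A) *\<^sub>v v + D *\<^sub>v v"
    using A s D AT v by (simp add: add_mult_distrib_mat_vec[of _ N N])
  also have "(A * \<sigma>) *\<^sub>v v = l \<cdot>\<^sub>v (A *\<^sub>v v)" using A s v ev by (simp add: mult_mat_vec[OF A])
  also have "(\<sigma> * transpose_mat A) *\<^sub>v v = \<sigma> *\<^sub>v (transpose_mat A *\<^sub>v v)" using s AT v by simp
  finally have 1: "v \<bullet> ((A * \<sigma> + \<sigma> * transpose_mat A + D) *\<^sub>v v)
     = l * (v \<bullet> (A *\<^sub>v v)) + v \<bullet> (\<sigma> *\<^sub>v (transpose_mat A *\<^sub>v v)) + v \<bullet> (D *\<^sub>v v)"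
    using A s D AT v by (simp add: scalar_prod_add_distrib[of _ N])
  have "v \<bullet> (\<sigma> *\<^sub>v (transpose_mat A *\<^sub>v v)) = (transpose_mat \<sigma> *\<^sub>v v) \<bullet> (transpose_mat A *\<^sub>v v)"
    using inner_transp[OF s v, of "transpose_mat A *\<^sub>v v"] AT v by simp
  also have "\<dots> = l * (v \<bullet> (transpose_mat A *\<^sub>v v))" unfolding ssym ev using v AT by simp
  finally have 2: "v \<bullet> (\<sigma> *\<^sub>v (transpose_mat A *\<^sub>v v)) = l * (v \<bullet> (transpose_mat A *\<^sub>v v))" .
  have 3: "v \<bullet> ((A + transpose_mat A) *\<^sub>v v) = v \<bullet> (A *\<^sub>v v) + v \<bullet> (transpose_mat A *\<^sub>v v)"
    using A AT v by (simp add: add_mult_distrib_mat_vec[of _ N N] scalar_prod_add_distrib[of _ N])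
  show ?thesis unfolding 1 2 3 by (simp add: algebra_simps)
qed

lemma psd_from_cm:
  fixes \<sigma> :: "real mat"
  assumes s: "\<sigma> \<in> carrier_mat N N" and Om: "Om \<in> carrier_mat N N"
    and cm: "complex_psd (map_mat complex_of_real \<sigma> + \<i> \<cdot>\<^sub>m map_mat complex_of_real Om)"
    and x: "x \<in> carrier_vec N"
  shows "x \<bullet> (\<sigma> *\<^sub>v x) \<ge> 0"
proof -
  define xc where "xc = map_vec complex_of_real x"
  have xc: "xc \<in> carrier_vec N" using x by (simp add: xc_def)
  have "Re (conjugate xc \<bullet> ((map_mat complex_of_real \<sigma> + \<i> \<cdot>\<^sub>m map_mat complex_of_real Om) *\<^sub>v xc)) \<ge> 0"
    using cm xc s Om unfolding complex_psd_def by auto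
  also have "Re (conjugate xc \<bullet> ((map_mat complex_of_real \<sigma> + \<i> \<cdot>\<^sub>m map_mat complex_of_real Om) *\<^sub>v xc))
     = x \<bullet> (\<sigma> *\<^sub>v x)"
    using s Om x by (simp add: xc_def scalar_prod_def mult_mat_vec_def row_def sum_distrib_left algebra_simps)
  finally show ?thesis .
qed


theorem lemma3:
  fixes n :: nat and A D \<sigma> :: "real mat" and lam alpha delta :: "real list"
  assumes n: "n \<ge> 1"
    and A: "A \<in> carrier_mat (2*n) (2*n)"
    and D: "D \<in> carrier_mat (2*n) (2*n)"
    and \<sigma>: "\<sigma> \<in> carrier_mat (2*n) (2*n)"
    and Aneg: "real_negdef (A + A\<^sup>T)"
    and Dsym: "D\<^sup>T = D"
    and Dpos: "\<forall>e. eigenvalue D e \<longrightarrow> e > 0"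
    and \<sigma>sym: "\<sigma>\<^sup>T = \<sigma>"
    and cm: "complex_psd (map_mat complex_of_real \<sigma> + \<i> \<cdot>\<^sub>m map_mat complex_of_real (Omega n))"
    and cond: "real_psd (A * \<sigma> + \<sigma> * A\<^sup>T + D)"
    and lam: "eigenvalue_list \<sigma> lam" "sorted_wrt (\<ge>) lam"
    and alpha: "eigenvalue_list (- (A + A\<^sup>T)) alpha" "sorted alpha"
    and delta: "eigenvalue_list D delta" "sorted_wrt (\<ge>) delta"
  shows "lam ! 0 * lam ! 1 \<le> (delta ! 0 + delta ! 1)\<^sup>2 / (4 * (alpha ! 0) * (alpha ! 1))"
proof -
  define N where "N = 2 * n"
  have N2: "2 \<le> N" using n by (simp add: N_def)
  have A: "A \<in> carrier_mat N N" and D: "D \<in> carrier_mat N N" and s: "\<sigma> \<in> carrier_mat N N"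
    using A D \<sigma> by (auto simp: N_def)
  have AT: "A\<^sup>T \<in> carrier_mat N N" using A by simp
  define M where "M = - (A + A\<^sup>T)"
  have Mc: "M \<in> carrier_mat N N" using A AT by (simp add: M_def)
  have Msym: "M\<^sup>T = M" unfolding M_def by (rule eq_matI) (use A in auto)
  have lenD: "length delta = N" and lenA: "length alpha = N"
    using delta(1) alpha(1) A D unfolding eigenvalue_list_def M_def by auto
  from spec2[OF s \<sigma>sym lam(1)] obtain Ps where Ps: "Ps \<in> carrier_mat N N"
    and PsPs: "Ps\<^sup>T * Ps = 1\<^sub>m N" and Psev: "\<forall>k<N. \<sigma> *\<^sub>v (Ps *\<^sub>v unit_vec N k) = lam!k \<cdot>\<^sub>v (Ps *\<^sub>v unit_vec N k)"
    by auto
  from spec2[OF D Dsym delta(1)] obtain Pd where Pd: "Pd \<in> carrier_mat N N"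
    and PdPd: "Pd * Pd\<^sup>T = 1\<^sub>m N" and Dq: "\<forall>x\<in>carrier_vec N. x \<bullet> (D *\<^sub>v x) = (\<Sum>k<N. delta!k * ((Pd\<^sup>T *\<^sub>v x)$k)^2)"
    by auto
  from spec2[OF Mc Msym alpha(1)[folded M_def]] obtain Pm where Pm: "Pm \<in> carrier_mat N N"
    and PmPm: "Pm\<^sup>T * Pm = 1\<^sub>m N" and PmPm': "Pm * Pm\<^sup>T = 1\<^sub>m N"
    and Mev: "\<forall>k<N. M *\<^sub>v (Pm *\<^sub>v unit_vec N k) = alpha!k \<cdot>\<^sub>v (Pm *\<^sub>v unit_vec N k)"
    and Mq: "\<forall>x\<in>carrier_vec N. x \<bullet> (M *\<^sub>v x) = (\<Sum>k<N. alpha!k * ((Pm\<^sup>T *\<^sub>v x)$k)^2)"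
    by auto
  define v1 where "v1 = Ps *\<^sub>v unit_vec N 0"
  define v2 where "v2 = Ps *\<^sub>v unit_vec N 1"
  have v1: "v1 \<in> carrier_vec N" and v2: "v2 \<in> carrier_vec N" using Ps by (auto simp: v1_def v2_def)
  have v11: "v1 \<bullet> v1 = 1" and v22: "v2 \<bullet> v2 = 1" and v12: "v1 \<bullet> v2 = 0"
    using orthvec[OF Ps PsPs, of 0 0] orthvec[OF Ps PsPs, of 1 1] orthvec[OF Ps PsPs, of 0 1] N2
    by (auto simp: v1_def v2_def)
  have ev1: "\<sigma> *\<^sub>v v1 = lam!0 \<cdot>\<^sub>v v1" and ev2: "\<sigma> *\<^sub>v v2 = lam!1 \<cdot>\<^sub>v v2"
    using Psev N2 by (auto simp: v1_def v2_def)
  have Om: "Omega n \<in> carrier_mat N N" by (simp add: Omega_def N_def)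
  have lpos: "0 \<le> l" if "v \<in> carrier_vec N" "v \<bullet> v = 1" "\<sigma> *\<^sub>v v = l \<cdot>\<^sub>v v" for v l
  proof -
    have "0 \<le> v \<bullet> (\<sigma> *\<^sub>v v)" by (rule psd_from_cm[OF s Om cm that(1)])
    also have "v \<bullet> (\<sigma> *\<^sub>v v) = l" using that by simp
    finally show ?thesis .
  qed
  have l1: "0 \<le> lam!0" using lpos[OF v1 v11 ev1] .
  have l2: "0 \<le> lam!1" using lpos[OF v2 v22 ev2] .
  have qM: "v \<bullet> (M *\<^sub>v v) = - (v \<bullet> ((A + A\<^sup>T) *\<^sub>v v))" if "v \<in> carrier_vec N" for v
    using that A by (simp add: M_def)
  have key: "l * (v \<bullet> (M *\<^sub>v v)) \<le> v \<bullet> (D *\<^sub>v v)" if v: "v \<in> carrier_vec N" and ev: "\<sigma> *\<^sub>v v = l \<cdot>\<^sub>v v" for v l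
  proof -
    have "0 \<le> v \<bullet> ((A * \<sigma> + \<sigma> * A\<^sup>T + D) *\<^sub>v v)"
      using cond v A D unfolding real_psd_def by auto
    also have "\<dots> = l * (v \<bullet> ((A + A\<^sup>T) *\<^sub>v v)) + v \<bullet> (D *\<^sub>v v)"
      by (rule qS[OF A s D \<sigma>sym v ev])
    finally show ?thesis using qM[OF v] by simp
  qed
  define a1 where "a1 = v1 \<bullet> (M *\<^sub>v v1)"
  define a2 where "a2 = v2 \<bullet> (M *\<^sub>v v2)"
  have k1: "lam!0 * a1 + lam!1 * a2 \<le> v1 \<bullet> (D *\<^sub>v v1) + v2 \<bullet> (D *\<^sub>v v2)"
    using key[OF v1 ev1] key[OF v2 ev2] unfolding a1_def a2_def by linarith
  define y1 where "y1 = Pd\<^sup>T *\<^sub>v v1"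
  define y2 where "y2 = Pd\<^sup>T *\<^sub>v v2"
  have PdT: "Pd\<^sup>T \<in> carrier_mat N N" using Pd by simp
  have y1: "y1 \<in> carrier_vec N" and y2: "y2 \<in> carrier_vec N" unfolding y1_def y2_def using PdT v1 v2 by (auto intro: mult_mat_vec_carrier)
  have y11: "y1 \<bullet> y1 = 1" and y22: "y2 \<bullet> y2 = 1" and y12: "y1 \<bullet> y2 = 0"
    using inner_pres[OF Pd PdPd] v1 v2 v11 v22 v12 by (auto simp: y1_def y2_def)
  have sq: "(\<Sum>k<N. (y$k)^2) = y \<bullet> y" if "y \<in> carrier_vec N" for y :: "real vec"
    using that by (simp add: scalar_prod_def power2_eq_square atLeast0LessThan)
  have Dsum: "v1 \<bullet> (D *\<^sub>v v1) + v2 \<bullet> (D *\<^sub>v v2) = (\<Sum>k<N. delta!k * ((y1$k)^2 + (y2$k)^2))"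
    using Dq v1 v2 unfolding y1_def y2_def by (simp add: sum.distrib algebra_simps)
  have Dbound: "(\<Sum>k<N. delta!k * ((y1$k)^2 + (y2$k)^2)) \<le> delta!0 + delta!1"
  proof (rule kyfan2[OF N2])
    show "\<forall>k<N. 1 \<le> k \<longrightarrow> delta ! k \<le> delta ! 1"
      using delta(2) lenD by (auto simp: sorted_wrt_iff_nth_less le_less)
    show "delta ! 1 \<le> delta ! 0" using delta(2) lenD N2 by (auto simp: sorted_wrt_iff_nth_less)
    show "\<forall>k<N. 0 \<le> (y1$k)^2 + (y2$k)^2 \<and> (y1$k)^2 + (y2$k)^2 \<le> 1"
      using bessel2[OF y1 y2 y11 y22 y12] by auto
    show "(\<Sum>k<N. (y1$k)^2 + (y2$k)^2) = 2" using sq[OF y1] sq[OF y2] y11 y22 by (simp add: sum.distrib)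
  qed
  define z1 where "z1 = Pm\<^sup>T *\<^sub>v v1"
  define z2 where "z2 = Pm\<^sup>T *\<^sub>v v2"
  have PmT: "Pm\<^sup>T \<in> carrier_mat N N" using Pm by simp
  have z1: "z1 \<in> carrier_vec N" and z2: "z2 \<in> carrier_vec N" unfolding z1_def z2_def using PmT v1 v2 by (auto intro: mult_mat_vec_carrier)
  have z11: "z1 \<bullet> z1 = 1" and z22: "z2 \<bullet> z2 = 1" and z12: "z1 \<bullet> z2 = 0"
    using inner_pres[OF Pm PmPm'] v1 v2 v11 v22 v12 by (auto simp: z1_def z2_def)
  have a1e: "a1 = (\<Sum>k<N. alpha!k * (z1$k)^2)" using Mq v1 unfolding a1_def z1_def by simp
  have a2e: "a2 = (\<Sum>k<N. alpha!k * (z2$k)^2)" using Mq v2 unfolding a2_def z2_def by simp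
  have amono: "alpha!0 \<le> alpha!k" if "k < N" for k
    using alpha(2) lenA that by (auto simp: sorted_iff_nth_mono)
  have amono1: "alpha!1 \<le> alpha!k" if "k < N" "1 \<le> k" for k
    using alpha(2) lenA that by (auto simp: sorted_iff_nth_mono)
  have lowb: "alpha!0 \<le> (\<Sum>k<N. alpha!k * (z$k)^2)" if z: "z \<in> carrier_vec N" "z \<bullet> z = 1" for z
  proof -
    have "(\<Sum>k<N. (- alpha!k) * (z$k)^2) \<le> - alpha!0"
      using kyfan1[of N "\<lambda>k. - alpha!k" "\<lambda>k. (z$k)^2"] amono sq[OF z(1)] z(2) by auto
    then show ?thesis by (simp add: sum_negf)
  qed
  have a1b: "alpha!0 \<le> a1" unfolding a1e by (rule lowb[OF z1 z11])
  have a2b: "alpha!0 \<le> a2" unfolding a2e by (rule lowb[OF z2 z22])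
  have a12b: "alpha!0 + alpha!1 \<le> a1 + a2"
  proof -
    have "(\<Sum>k<N. (- alpha!k) * ((z1$k)^2 + (z2$k)^2)) \<le> - alpha!0 + - alpha!1"
    proof (rule kyfan2[OF N2])
      show "\<forall>k<N. 1 \<le> k \<longrightarrow> - alpha ! k \<le> - alpha ! 1" using amono1 by auto
      show "- alpha ! 1 \<le> - alpha ! 0" using amono N2 by auto
      show "\<forall>k<N. 0 \<le> (z1$k)^2 + (z2$k)^2 \<and> (z1$k)^2 + (z2$k)^2 \<le> 1"
        using bessel2[OF z1 z2 z11 z22 z12] by auto
      show "(\<Sum>k<N. (z1$k)^2 + (z2$k)^2) = 2" using sq[OF z1] sq[OF z2] z11 z22 by (simp add: sum.distrib)
    qed
    moreover have "(\<Sum>k<N. (- alpha!k) * ((z1$k)^2 + (z2$k)^2)) = - ((\<Sum>k<N. alpha!k * (z1$k)^2) + (\<Sum>k<N. alpha!k * (z2$k)^2))"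
    proof -
      have "(\<Sum>k<N. (- alpha!k) * ((z1$k)^2 + (z2$k)^2)) = (\<Sum>k<N. - (alpha!k * (z1$k)^2 + alpha!k * (z2$k)^2))"
        by (rule sum.cong) (auto simp: algebra_simps)
      also have "\<dots> = - ((\<Sum>k<N. alpha!k * (z1$k)^2) + (\<Sum>k<N. alpha!k * (z2$k)^2))"
        by (simp only: sum_negf sum.distrib)
      finally show ?thesis .
    qed
    ultimately show ?thesis unfolding a1e a2e by linarith
  qed
  have apos: "0 < alpha!0"
  proof -
    define u where "u = Pm *\<^sub>v unit_vec N 0"
    have u: "u \<in> carrier_vec N" using Pm by (simp add: u_def)
    have uu: "u \<bullet> u = 1" using orthvec[OF Pm PmPm, of 0 0] N2 by (simp add: u_def)
    have u0: "u \<noteq> 0\<^sub>v N" using uu by auto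
    have "M *\<^sub>v u = alpha!0 \<cdot>\<^sub>v u" using Mev N2 unfolding u_def by auto
    then have "u \<bullet> (M *\<^sub>v u) = alpha!0" using u uu by simp
    moreover have "u \<bullet> ((A + A\<^sup>T) *\<^sub>v u) < 0"
      using Aneg u u0 A unfolding real_negdef_def by auto
    ultimately show ?thesis using qM[OF u] by simp
  qed
  have a01: "alpha!0 \<le> alpha!1" using amono N2 by auto
  show ?thesis
    by (rule final_ineq[OF l1 l2 a1b a2b apos a01 a12b]) (use k1 Dsum Dbound in linarith)
qed

end
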